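(* Assume (H2). Then for any $q,q'\in\mathbb R^d$ with $q\ne q'$ and any $A>0$ there is $\kappa>0$ such that \[\lim_{\delta\to0}\limsup_{n\to\infty}\sup_{z\in E:|z-nq|<\delta n}\frac1n\log\int_0^{\kappa n}\mathbb P_z\bigl(Z(t)\in nB(q',\delta)\bigr)\,dt\ \le\ -A.\]
   Context: Let $E\subset\mathbb R^d$ be unbounded and $(Z(t))_{t\ge0}$ a continuous-time strong Markov process on $E$ with right-continuous paths having left limits; $\mathbb P_z,\mathbb E_z$ denote probability and expectation given $Z(0)=z$. For $B\subset\mathbb R^d$ and $n>0$, $nB=\{nx:x\in B\}$; $B(x,r)$ is the open ball of center $x$ and radius $r$. (H2): the function $\hat\varphi(a)=\sup_{z\in E}\sup_{t\in[0,1]}\mathbb E_z(e^{a\cdot(Z(t)-z)})$ is finite for every $a\in\mathbb R^d$. *)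

theory Defs
  imports "HOL-Probability.Probability"
begin

definition cadlag :: "(real \<Rightarrow> 'a::topological_space) \<Rightarrow> bool" where
  "cadlag f \<longleftrightarrow> (\<forall>t\<ge>0. continuous (at_right t) f) \<and> (\<forall>t>0. \<exists>l. (f \<longlongrightarrow> l) (at_left t))"

text \<open>M is the underlying measurable space, F a filtration to which Z is adapted, and
  P z the law under which Z(0) = z (so P_z = P z, E_z = integration w.r.t. P z).\<close>
definition strong_markov_process ::
  "'a::euclidean_space set \<Rightarrow> 'w measure \<Rightarrow> (real \<Rightarrow> 'w measure) \<Rightarrow> ('a \<Rightarrow> 'w measure)
    \<Rightarrow> (real \<Rightarrow> 'w \<Rightarrow> 'a) \<Rightarrow> bool" where
  "strong_markov_process E M F P Z \<longleftrightarrow>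
     (\<forall>t. subalgebra M (F t)) \<and> (\<forall>s t. s \<le> t \<longrightarrow> sets (F s) \<subseteq> sets (F t)) \<and>
     (\<forall>t\<ge>0. Z t \<in> borel_measurable (F t)) \<and>
     (\<forall>\<omega>\<in>space M. \<forall>t\<ge>0. Z t \<omega> \<in> E) \<and>
     (\<forall>\<omega>\<in>space M. cadlag (\<lambda>t. Z t \<omega>)) \<and>
     (\<forall>z\<in>E. prob_space (P z) \<and> sets (P z) = sets M) \<and>
     (\<forall>z\<in>E. AE \<omega> in P z. Z 0 \<omega> = z) \<and>
     (\<forall>t\<ge>0. \<forall>B\<in>sets borel.
        (\<lambda>z. measure (P z) {\<omega>\<in>space M. Z t \<omega> \<in> B}) \<in> borel_measurable (restrict_space borel E)) \<and>
     (\<forall>z\<in>E. \<forall>\<tau>. stopping_time F \<tau> \<and> (\<forall>\<omega>\<in>space M. 0 \<le> \<tau> \<omega>) \<longrightarrow>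
        (\<forall>t\<ge>0. \<forall>B\<in>sets borel. \<forall>A\<in>sets M. (\<forall>s. {\<omega>\<in>A. \<tau> \<omega> \<le> s} \<in> sets (F s)) \<longrightarrow>
          measure (P z) {\<omega>\<in>A. Z (\<tau> \<omega> + t) \<omega> \<in> B} =
          (\<integral>\<omega>. indicator A \<omega> * measure (P (Z (\<tau> \<omega>) \<omega>)) {\<omega>'\<in>space M. Z t \<omega>' \<in> B} \<partial>P z)))"

definition eln :: "real \<Rightarrow> ereal" where
  "eln x = (if x \<le> 0 then -\<infinity> else ereal (ln x))"

end

theory Submission
  imports Defs "HOL-Real_Asymp.Real_Asymp"
begin


locale smp =
  fixes E :: "'a::euclidean_space set" and M :: "'w measure" and F :: "real \<Rightarrow> 'w measure"
    and P :: "'a \<Rightarrow> 'w measure" and Z :: "real \<Rightarrow> 'w \<Rightarrow> 'a"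
  assumes markov: "strong_markov_process E M F P Z"
begin

lemma Zmeas: "t \<ge> 0 \<Longrightarrow> Z t \<in> borel_measurable M"
proof -
  assume t: "t \<ge> 0"
  have "subalgebra M (F t)" "Z t \<in> borel_measurable (F t)"
    using markov t unfolding strong_markov_process_def by auto
  then show ?thesis
    by (metis measurable_from_subalg)
qed

lemma ZE: "\<omega> \<in> space M \<Longrightarrow> t \<ge> 0 \<Longrightarrow> Z t \<omega> \<in> E"
  using markov unfolding strong_markov_process_def by auto

lemma cad: "\<omega> \<in> space M \<Longrightarrow> cadlag (\<lambda>t. Z t \<omega>)"
  using markov unfolding strong_markov_process_def by auto

lemma probP: "z \<in> E \<Longrightarrow> prob_space (P z)"
  using markov unfolding strong_markov_process_def by auto

lemma setsP: "z \<in> E \<Longrightarrow> sets (P z) = sets M"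
  using markov unfolding strong_markov_process_def by auto

lemma spaceP: "z \<in> E \<Longrightarrow> space (P z) = space M"
  by (rule sets_eq_imp_space_eq[OF setsP])

lemma ZmeasP: "z \<in> E \<Longrightarrow> t \<ge> 0 \<Longrightarrow> Z t \<in> borel_measurable (P z)"
  by (subst measurable_cong_sets[OF setsP refl]) (auto intro: Zmeas)

lemma AE0: "z \<in> E \<Longrightarrow> AE \<omega> in P z. Z 0 \<omega> = z"
  using markov unfolding strong_markov_process_def by auto

lemma kmeas: "t \<ge> 0 \<Longrightarrow> B \<in> sets borel \<Longrightarrow>
  (\<lambda>z. measure (P z) {\<omega>\<in>space M. Z t \<omega> \<in> B}) \<in> borel_measurable (restrict_space borel E)"
  using markov unfolding strong_markov_process_def by auto

lemma simple_markov:
  assumes z: "z \<in> E" and s: "s \<ge> 0" and r: "r \<ge> 0" and B: "B \<in> sets borel"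
  shows "measure (P z) {\<omega>\<in>space M. Z (s + r) \<omega> \<in> B} =
     (\<integral>\<omega>. measure (P (Z s \<omega>)) {\<omega>'\<in>space M. Z r \<omega>' \<in> B} \<partial>P z)"
proof -
  have sub: "\<And>t. subalgebra M (F t)" and mono: "\<And>s t. s \<le> t \<Longrightarrow> sets (F s) \<subseteq> sets (F t)"
    using markov unfolding strong_markov_process_def by auto
  have SM: "\<And>\<tau>. stopping_time F \<tau> \<and> (\<forall>\<omega>\<in>space M. 0 \<le> \<tau> \<omega>) \<longrightarrow>
        (\<forall>t\<ge>0. \<forall>B\<in>sets borel. \<forall>A\<in>sets M. (\<forall>s. {\<omega>\<in>A. \<tau> \<omega> \<le> s} \<in> sets (F s)) \<longrightarrow>
          measure (P z) {\<omega>\<in>A. Z (\<tau> \<omega> + t) \<omega> \<in> B} =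
          (\<integral>\<omega>. indicator A \<omega> * measure (P (Z (\<tau> \<omega>) \<omega>)) {\<omega>'\<in>space M. Z t \<omega>' \<in> B} \<partial>P z))"
    using markov z unfolding strong_markov_process_def by blast
  have A: "\<forall>s'. {\<omega>\<in>space M. s \<le> s'} \<in> sets (F s')"
  proof
    fix s'
    show "{\<omega>\<in>space M. s \<le> s'} \<in> sets (F s')"
    proof (cases "s \<le> s'")
      case True
      have "space (F s') = space M" using sub[of s'] by (simp add: subalgebra_def)
      then have "{\<omega>\<in>space M. s \<le> s'} = space (F s')" using True by simp
      then show ?thesis by simp
    next
      case False then show ?thesis by simp
    qed
  qed
  have "measure (P z) {\<omega>\<in>space M. Z (s + r) \<omega> \<in> B} =
          (\<integral>\<omega>. indicator (space M) \<omega> * measure (P (Z s \<omega>)) {\<omega>'\<in>space M. Z r \<omega>' \<in> B} \<partial>P z)"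
  proof -
    have st: "stopping_time F (\<lambda>_. s) \<and> (\<forall>\<omega>\<in>space M. 0 \<le> s)"
      using s by (simp add: stopping_time_const)
    have sM: "space M \<in> sets M" by simp
    show ?thesis
      using SM[of "\<lambda>_. s", THEN mp, OF st, rule_format, OF r B sM A[rule_format]] by simp
  qed
  also have "\<dots> = (\<integral>\<omega>. measure (P (Z s \<omega>)) {\<omega>'\<in>space M. Z r \<omega>' \<in> B} \<partial>P z)"
    by (rule Bochner_Integration.integral_cong) (auto simp: spaceP[OF z])
  finally show ?thesis .
qed

lemma Zs_meas: "z \<in> E \<Longrightarrow> s \<ge> 0 \<Longrightarrow> Z s \<in> measurable (P z) (restrict_space borel E)"
  by (intro measurable_restrict_space2 ZmeasP) (auto simp: spaceP ZE)

lemma K_meas: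
  assumes r: "r \<ge> 0"
  shows "(\<lambda>y. distr (P y) borel (Z r)) \<in> measurable (restrict_space borel E) (subprob_algebra borel)"
proof (rule measurable_subprob_algebra)
  fix a assume a: "a \<in> space (restrict_space borel E)"
  then have aE: "a \<in> E" by (simp add: space_restrict_space)
  interpret prob_space "P a" using probP[OF aE] .
  show "subprob_space (distr (P a) borel (Z r))"
    using prob_space_distr[OF ZmeasP[OF aE r]] prob_space_imp_subprob_space by blast
  show "sets (distr (P a) borel (Z r)) = sets borel" by simp
next
  fix X :: "'a set" assume X: "X \<in> sets borel"
  have "(\<lambda>a. ennreal (measure (P a) {\<omega>\<in>space M. Z r \<omega> \<in> X})) \<in> borel_measurable (restrict_space borel E)"
    using kmeas[OF r X] by measurable
  then show "(\<lambda>a. emeasure (distr (P a) borel (Z r)) X) \<in> borel_measurable (restrict_space borel E)"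
  proof (rule measurable_cong[THEN iffD1, rotated])
    fix a assume "a \<in> space (restrict_space borel E)"
    then have aE: "a \<in> E" by (simp add: space_restrict_space)
    interpret prob_space "P a" using probP[OF aE] .
    have "emeasure (distr (P a) borel (Z r)) X = emeasure (P a) (Z r -` X \<inter> space (P a))"
      by (rule emeasure_distr[OF ZmeasP[OF aE r] X])
    also have "Z r -` X \<inter> space (P a) = {\<omega>\<in>space M. Z r \<omega> \<in> X}"
      using spaceP[OF aE] by auto
    also have "emeasure (P a) \<dots> = ennreal (measure (P a) {\<omega>\<in>space M. Z r \<omega> \<in> X})"
      by (simp add: emeasure_eq_measure)
    finally show "ennreal (measure (P a) {\<omega>\<in>space M. Z r \<omega> \<in> X}) = emeasure (distr (P a) borel (Z r)) X" by simp
  qed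
qed

lemma nn_markov:
  assumes z: "z \<in> E" and s: "s \<ge> 0" and r: "r \<ge> 0" and h: "h \<in> borel_measurable borel"
  shows "(\<integral>\<^sup>+\<omega>. h (Z (s + r) \<omega>) \<partial>P z) = (\<integral>\<^sup>+\<omega>. (\<integral>\<^sup>+\<omega>'. h (Z r \<omega>') \<partial>P (Z s \<omega>)) \<partial>P z)"
proof -
  interpret prob_space "P z" using probP[OF z] .
  define N where "N = distr (P z) (restrict_space borel E) (Z s)"
  define K where "K = (\<lambda>y. distr (P y) borel (Z r))"
  have Kmeas: "K \<in> measurable N (subprob_algebra borel)"
    unfolding K_def N_def by (simp add: K_meas[OF r])
  have Kmeas': "K \<in> measurable (restrict_space borel E) (subprob_algebra borel)"
    unfolding K_def by (simp add: K_meas[OF r])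
  have spN: "space N \<noteq> {}" using z by (auto simp add: N_def space_restrict_space)
  have sr: "s + r \<ge> 0" using s r by simp
  have eq: "distr (P z) borel (Z (s + r)) = N \<bind> K"
  proof (rule measure_eqI)
    show "sets (distr (P z) borel (Z (s + r))) = sets (N \<bind> K)"
      using sets_bind[OF subprob_measurableD(2)[OF Kmeas] spN] by simp
  next
    fix X assume "X \<in> sets (distr (P z) borel (Z (s + r)))"
    then have X: "X \<in> sets borel" by simp
    define g where "g = (\<lambda>\<omega>. measure (P (Z s \<omega>)) {\<omega>'\<in>space M. Z r \<omega>' \<in> X})"
    have gm: "g \<in> borel_measurable (P z)"
      unfolding g_def using measurable_compose[OF Zs_meas[OF z s] kmeas[OF r X]] .
    have gint: "integrable (P z) g"
    proof (rule integrable_const_bound[where B=1])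
      show "AE x in P z. norm (g x) \<le> 1"
      proof (rule AE_I2)
        fix \<omega> assume "\<omega> \<in> space (P z)"
        then have yE: "Z s \<omega> \<in> E" using ZE s spaceP[OF z] by auto
        interpret Q: prob_space "P (Z s \<omega>)" using probP[OF yE] .
        show "norm (g \<omega>) \<le> 1" by (simp add: g_def Q.prob_le_1)
      qed
    qed (rule gm)
    have "emeasure (distr (P z) borel (Z (s + r))) X = emeasure (P z) (Z (s+r) -` X \<inter> space (P z))"
      by (rule emeasure_distr[OF ZmeasP[OF z sr] X])
    also have "Z (s+r) -` X \<inter> space (P z) = {\<omega>\<in>space M. Z (s+r) \<omega> \<in> X}"
      using spaceP[OF z] by auto
    also have "emeasure (P z) \<dots> = ennreal (measure (P z) {\<omega>\<in>space M. Z (s+r) \<omega> \<in> X})"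
      by (simp add: emeasure_eq_measure)
    also have "\<dots> = ennreal (\<integral>\<omega>. g \<omega> \<partial>P z)"
      unfolding g_def using simple_markov[OF z s r X] by simp
    also have "\<dots> = (\<integral>\<^sup>+\<omega>. ennreal (g \<omega>) \<partial>P z)"
      by (rule nn_integral_eq_integral[symmetric, OF gint]) (auto simp: g_def)
    also have "\<dots> = (\<integral>\<^sup>+\<omega>. emeasure (K (Z s \<omega>)) X \<partial>P z)"
    proof (rule nn_integral_cong)
      fix \<omega> assume "\<omega> \<in> space (P z)"
      then have yE: "Z s \<omega> \<in> E" using ZE s spaceP[OF z] by auto
      interpret Q: prob_space "P (Z s \<omega>)" using probP[OF yE] .
      have "emeasure (K (Z s \<omega>)) X = emeasure (P (Z s \<omega>)) (Z r -` X \<inter> space (P (Z s \<omega>)))"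
        unfolding K_def by (rule emeasure_distr[OF ZmeasP[OF yE r] X])
      also have "Z r -` X \<inter> space (P (Z s \<omega>)) = {\<omega>'\<in>space M. Z r \<omega>' \<in> X}"
        using spaceP[OF yE] by auto
      finally show "ennreal (g \<omega>) = emeasure (K (Z s \<omega>)) X"
        by (simp add: g_def Q.emeasure_eq_measure)
    qed
    also have "\<dots> = (\<integral>\<^sup>+y. emeasure (K y) X \<partial>N)"
      unfolding N_def
      by (rule nn_integral_distr[symmetric, OF Zs_meas[OF z s]])
         (simp only: measurable_distr_eq1, rule measurable_compose[OF Kmeas' measurable_emeasure_subprob_algebra[OF X]])
    also have "\<dots> = emeasure (N \<bind> K) X"
      by (rule emeasure_bind[symmetric, OF spN Kmeas X])
    finally show "emeasure (distr (P z) borel (Z (s + r))) X = emeasure (N \<bind> K) X" .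
  qed
  have "(\<integral>\<^sup>+\<omega>. h (Z (s + r) \<omega>) \<partial>P z) = (\<integral>\<^sup>+x. h x \<partial>distr (P z) borel (Z (s + r)))"
    by (rule nn_integral_distr[symmetric, OF ZmeasP[OF z sr]]) (simp add: h)
  also have "\<dots> = (\<integral>\<^sup>+y. \<integral>\<^sup>+x. h x \<partial>K y \<partial>N)"
    unfolding eq by (rule nn_integral_bind[OF h Kmeas])
  also have "\<dots> = (\<integral>\<^sup>+\<omega>. (\<integral>\<^sup>+x. h x \<partial>K (Z s \<omega>)) \<partial>P z)"
    unfolding N_def
    by (rule nn_integral_distr[OF Zs_meas[OF z s]])
       (simp only: measurable_distr_eq1, rule measurable_compose[OF Kmeas' nn_integral_measurable_subprob_algebra[OF h]])
  also have "\<dots> = (\<integral>\<^sup>+\<omega>. (\<integral>\<^sup>+\<omega>'. h (Z r \<omega>') \<partial>P (Z s \<omega>)) \<partial>P z)"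
  proof (rule nn_integral_cong)
    fix \<omega> assume "\<omega> \<in> space (P z)"
    then have yE: "Z s \<omega> \<in> E" using ZE s spaceP[OF z] by auto
    show "(\<integral>\<^sup>+x. h x \<partial>K (Z s \<omega>)) = (\<integral>\<^sup>+\<omega>'. h (Z r \<omega>') \<partial>P (Z s \<omega>))"
      unfolding K_def by (rule nn_integral_distr[OF ZmeasP[OF yE r]]) (simp add: h)
  qed
  finally show ?thesis .
qed

definition Phi :: "'a \<Rightarrow> real" where
  "Phi a = max 1 (enn2real (SUP z\<in>E. SUP t\<in>{0..1}. \<integral>\<^sup>+\<omega>. ennreal (exp (a \<bullet> (Z t \<omega> - z))) \<partial>P z))"

lemma Phi_ge1: "Phi a \<ge> 1" by (simp add: Phi_def)

lemma exp_base:
  assumes fin: "(SUP z\<in>E. SUP t\<in>{0..1}. \<integral>\<^sup>+\<omega>. ennreal (exp (a \<bullet> (Z t \<omega> - z))) \<partial>P z) < \<infinity>"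
    and z: "z \<in> E" and t: "t \<in> {0..1}"
  shows "(\<integral>\<^sup>+\<omega>. ennreal (exp (a \<bullet> (Z t \<omega> - z))) \<partial>P z) \<le> ennreal (Phi a)"
proof -
  let ?S = "(SUP z\<in>E. SUP t\<in>{0..1}. \<integral>\<^sup>+\<omega>. ennreal (exp (a \<bullet> (Z t \<omega> - z))) \<partial>P z)"
  have "(\<integral>\<^sup>+\<omega>. ennreal (exp (a \<bullet> (Z t \<omega> - z))) \<partial>P z) \<le> ?S"
    by (rule SUP_upper2[OF z], rule SUP_upper[OF t])
  also have "?S = ennreal (enn2real ?S)" using fin by (intro ennreal_enn2real[symmetric]) simp
  also have "\<dots> \<le> ennreal (Phi a)" unfolding Phi_def by (intro ennreal_leI) simp
  finally show ?thesis .
qed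

lemma exp_bound:
  assumes fin: "(SUP z\<in>E. SUP t\<in>{0..1}. \<integral>\<^sup>+\<omega>. ennreal (exp (a \<bullet> (Z t \<omega> - z))) \<partial>P z) < \<infinity>"
  shows "\<forall>z\<in>E. \<forall>t\<in>{0..real (Suc k)}. (\<integral>\<^sup>+\<omega>. ennreal (exp (a \<bullet> (Z t \<omega> - z))) \<partial>P z) \<le> ennreal (Phi a ^ Suc k)"
proof (induction k)
  case 0
  then show ?case using exp_base[OF fin] by simp
next
  case (Suc k)
  show ?case
  proof (intro ballI)
    fix z t assume z: "z \<in> E" and t: "t \<in> {0..real (Suc (Suc k))}"
    show "(\<integral>\<^sup>+\<omega>. ennreal (exp (a \<bullet> (Z t \<omega> - z))) \<partial>P z) \<le> ennreal (Phi a ^ Suc (Suc k))"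
    proof (cases "t \<le> 1")
      case True
      then have "(\<integral>\<^sup>+\<omega>. ennreal (exp (a \<bullet> (Z t \<omega> - z))) \<partial>P z) \<le> ennreal (Phi a)"
        using exp_base[OF fin z] t by simp
      also have "\<dots> \<le> ennreal (Phi a ^ Suc (Suc k))"
        using power_increasing[of 1 "Suc (Suc k)" "Phi a"] Phi_ge1[of a] by (intro ennreal_leI) simp
      finally show ?thesis .
    next
      case False
      define s where "s = t - 1"
      have s0: "s \<ge> 0" and sk: "s \<in> {0..real (Suc k)}" using False t by (auto simp: s_def)
      have ts: "t = s + 1" by (simp add: s_def)
      have h: "(\<lambda>x. ennreal (exp (a \<bullet> (x - z)))) \<in> borel_measurable borel" by measurable
      have "(\<integral>\<^sup>+\<omega>. ennreal (exp (a \<bullet> (Z t \<omega> - z))) \<partial>P z) =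
          (\<integral>\<^sup>+\<omega>. (\<integral>\<^sup>+\<omega>'. ennreal (exp (a \<bullet> (Z 1 \<omega>' - z))) \<partial>P (Z s \<omega>)) \<partial>P z)"
        unfolding ts by (rule nn_markov[OF z s0 _ h]) simp
      also have "\<dots> \<le> (\<integral>\<^sup>+\<omega>. ennreal (exp (a \<bullet> (Z s \<omega> - z))) * ennreal (Phi a) \<partial>P z)"
      proof (rule nn_integral_mono)
        fix \<omega> assume "\<omega> \<in> space (P z)"
        then have yE: "Z s \<omega> \<in> E" using ZE s0 spaceP[OF z] by auto
        define y where "y = Z s \<omega>"
        have "(\<integral>\<^sup>+\<omega>'. ennreal (exp (a \<bullet> (Z 1 \<omega>' - z))) \<partial>P y) =
              (\<integral>\<^sup>+\<omega>'. ennreal (exp (a \<bullet> (y - z))) * ennreal (exp (a \<bullet> (Z 1 \<omega>' - y))) \<partial>P y)"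
          by (intro nn_integral_cong) (simp add: ennreal_mult'[symmetric] exp_add[symmetric] inner_diff_right)
        also have "\<dots> = ennreal (exp (a \<bullet> (y - z))) * (\<integral>\<^sup>+\<omega>'. ennreal (exp (a \<bullet> (Z 1 \<omega>' - y))) \<partial>P y)"
        proof (rule nn_integral_cmult)
          have yE': "y \<in> E" using yE by (simp add: y_def)
          have [measurable]: "Z 1 \<in> borel_measurable (P y)" by (rule ZmeasP[OF yE']) simp
          show "(\<lambda>\<omega>'. ennreal (exp (a \<bullet> (Z 1 \<omega>' - y)))) \<in> borel_measurable (P y)" by measurable
        qed
        also have "\<dots> \<le> ennreal (exp (a \<bullet> (y - z))) * ennreal (Phi a)"
          by (intro mult_left_mono exp_base[OF fin]) (auto simp: y_def yE)
        finally show "(\<integral>\<^sup>+\<omega>'. ennreal (exp (a \<bullet> (Z 1 \<omega>' - z))) \<partial>P (Z s \<omega>)) \<le> ennreal (exp (a \<bullet> (Z s \<omega> - z))) * ennreal (Phi a)"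
          by (simp add: y_def)
      qed
      also have "\<dots> = (\<integral>\<^sup>+\<omega>. ennreal (exp (a \<bullet> (Z s \<omega> - z))) \<partial>P z) * ennreal (Phi a)"
      proof (rule nn_integral_multc)
        have [measurable]: "Z s \<in> borel_measurable (P z)" by (rule ZmeasP[OF z s0])
        show "(\<lambda>\<omega>. ennreal (exp (a \<bullet> (Z s \<omega> - z)))) \<in> borel_measurable (P z)" by measurable
      qed
      also have "\<dots> \<le> ennreal (Phi a ^ Suc k) * ennreal (Phi a)"
        using Suc.IH z sk by (intro mult_right_mono) auto
      also have "\<dots> = ennreal (Phi a ^ Suc (Suc k))"
        using Phi_ge1[of a] by (simp add: ennreal_mult'[symmetric] mult.commute)
      finally show ?thesis .
    qed
  qed
qed

lemma dyadic_lim: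
  fixes t0 :: real assumes t0: "t0 \<ge> 0"
  shows "(\<lambda>m. real (nat \<lceil>t0 * 2^m\<rceil>) / 2^m) \<longlonglongrightarrow> t0"
    and "\<And>m. real (nat \<lceil>t0 * 2^m\<rceil>) / 2^m \<ge> t0"
proof -
  have eq: "real (nat \<lceil>t0 * 2^m\<rceil>) = real_of_int \<lceil>t0 * 2^m\<rceil>" for m :: nat
    using t0 by simp
  have lo: "real (nat \<lceil>t0 * 2^m\<rceil>) / 2^m \<ge> t0" for m :: nat
    unfolding eq by (simp add: pos_le_divide_eq)
  have hi: "real (nat \<lceil>t0 * 2^m\<rceil>) / 2^m \<le> t0 + (1/2)^m" for m :: nat
  proof -
    have "real_of_int \<lceil>t0 * 2^m\<rceil> \<le> t0 * 2^m + 1" by linarith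
    then show ?thesis unfolding eq by (simp add: divide_simps power_divide)
  qed
  show "\<And>m. real (nat \<lceil>t0 * 2^m\<rceil>) / 2^m \<ge> t0" by (rule lo)
  have "(\<lambda>m. t0 + (1/2::real)^m) \<longlonglongrightarrow> t0 + 0"
    by (intro tendsto_add tendsto_const LIMSEQ_realpow_zero) auto
  then show "(\<lambda>m. real (nat \<lceil>t0 * 2^m\<rceil>) / 2^m) \<longlonglongrightarrow> t0"
    using tendsto_sandwich[OF always_eventually[OF allI[OF lo]] always_eventually[OF allI[OF hi]] tendsto_const]
    by simp
qed

lemma Y_meas: "(\<lambda>p::real\<times>'w. Z (max 0 (fst p)) (snd p)) \<in> borel_measurable (borel \<Otimes>\<^sub>M M)"
proof (rule borel_measurable_LIMSEQ_metric)
  fix m :: nat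
  show "(\<lambda>p::real\<times>'w. Z (real (nat \<lceil>max 0 (fst p) * 2^m\<rceil>) / 2^m) (snd p)) \<in> borel_measurable (borel \<Otimes>\<^sub>M M)"
  proof (rule measurable_compose_countable'[where I=UNIV, of "\<lambda>i p. Z (real i / 2^m) (snd p)"])
    fix i :: nat
    show "(\<lambda>p::real\<times>'w. Z (real i / 2^m) (snd p)) \<in> borel_measurable (borel \<Otimes>\<^sub>M M)"
      by (rule measurable_compose[OF measurable_snd Zmeas]) simp
  next
    show "(\<lambda>p::real\<times>'w. nat \<lceil>max 0 (fst p) * 2^m\<rceil>) \<in> measurable (borel \<Otimes>\<^sub>M M) (count_space UNIV)"
      by measurable
  qed simp
next
  fix p :: "real \<times> 'w" assume "p \<in> space (borel \<Otimes>\<^sub>M M)"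
  then have \<omega>: "snd p \<in> space M" by (auto simp: space_pair_measure)
  define t0 where "t0 = max 0 (fst p)"
  have t0: "t0 \<ge> 0" by (simp add: t0_def)
  have "continuous (at_right t0) (\<lambda>t. Z t (snd p))" using cad[OF \<omega>] t0 by (simp add: cadlag_def)
  then have c: "continuous (at t0 within {t0..}) (\<lambda>t. Z t (snd p))" by (simp add: at_within_Ici_at_right)
  show "(\<lambda>m. Z (real (nat \<lceil>max 0 (fst p) * 2^m\<rceil>) / 2^m) (snd p)) \<longlonglongrightarrow> Z (max 0 (fst p)) (snd p)"
    using c[unfolded continuous_within_sequentially, rule_format, of "\<lambda>m. real (nat \<lceil>t0 * 2^m\<rceil>) / 2^m"]
      dyadic_lim[OF t0] by (simp add: t0_def o_def)
qed

lemma integrand_meas: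
  assumes z: "z \<in> E" and U: "U \<in> sets borel"
  shows "(\<lambda>t. measure (P z) {\<omega>\<in>space M. Z (max 0 t) \<omega> \<in> U}) \<in> borel_measurable borel"
proof -
  interpret prob_space "P z" using probP[OF z] .
  have Ym: "(\<lambda>p. Z (max 0 (fst p)) (snd p)) \<in> borel_measurable (borel \<Otimes>\<^sub>M P z)"
  proof -
    have "sets (borel \<Otimes>\<^sub>M P z) = sets (borel \<Otimes>\<^sub>M M)"
      by (rule sets_pair_measure_cong) (simp_all add: setsP z)
    then show ?thesis using Y_meas measurable_cong_sets by blast
  qed
  define Q where "Q = (\<lambda>p. Z (max 0 (fst p)) (snd p)) -` U \<inter> space (borel \<Otimes>\<^sub>M P z)"
  have Q: "Q \<in> sets (borel \<Otimes>\<^sub>M P z)" unfolding Q_def using Ym U by (rule measurable_sets)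
  have "(\<lambda>t. emeasure (P z) (Pair t -` Q)) \<in> borel_measurable borel"
    by (rule measurable_emeasure_Pair[OF Q])
  then have "(\<lambda>t. enn2real (emeasure (P z) (Pair t -` Q))) \<in> borel_measurable borel"
    by measurable
  moreover have "Pair t -` Q = {\<omega>\<in>space M. Z (max 0 t) \<omega> \<in> U}" for t
    by (auto simp: Q_def space_pair_measure spaceP[OF z])
  ultimately show ?thesis by (simp add: measure_def)
qed

lemma integrand_int:
  assumes z: "z \<in> E" and U: "U \<in> sets borel"
  shows "set_integrable lborel {0..b} (\<lambda>t. measure (P z) {\<omega>\<in>space M. Z t \<omega> \<in> U})"
proof -
  interpret prob_space "P z" using probP[OF z] .
  have m: "(\<lambda>t. measure (P z) {\<omega>\<in>space M. Z (max 0 t) \<omega> \<in> U}) \<in> borel_measurable lborel"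
    using integrand_meas[OF z U] by simp
  have "integrable lborel (\<lambda>t. indicator {0..b} t *\<^sub>R measure (P z) {\<omega>\<in>space M. Z (max 0 t) \<omega> \<in> U})"
  proof (rule integrableI_bounded_set[where A="{0..b}" and B=1])
    show "(\<lambda>t. indicator {0..b} t *\<^sub>R measure (P z) {\<omega>\<in>space M. Z (max 0 t) \<omega> \<in> U}) \<in> borel_measurable lborel"
      using m by measurable
  qed (auto simp: indicator_def prob_le_1 emeasure_lborel_Icc_eq)
  also have "(\<lambda>t. indicator {0..b} t *\<^sub>R measure (P z) {\<omega>\<in>space M. Z (max 0 t) \<omega> \<in> U}) =
             (\<lambda>t. indicator {0..b} t *\<^sub>R measure (P z) {\<omega>\<in>space M. Z t \<omega> \<in> U})"
    by (auto simp: indicator_def fun_eq_iff)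
  finally show ?thesis by (simp add: set_integrable_def)
qed


lemma prob_bound:
  assumes fin: "(SUP z\<in>E. SUP t\<in>{0..1}. \<integral>\<^sup>+\<omega>. ennreal (exp (a \<bullet> (Z t \<omega> - z))) \<partial>P z) < \<infinity>"
    and z: "z \<in> E" and t: "t \<in> {0..real (Suc k)}" and U: "U \<in> sets borel"
    and cond: "\<And>x. x \<in> U \<Longrightarrow> c \<le> a \<bullet> (x - z)"
  shows "measure (P z) {\<omega>\<in>space M. Z t \<omega> \<in> U} \<le> exp (-c) * Phi a ^ Suc k"
proof -
  interpret prob_space "P z" using probP[OF z] .
  have t0: "t \<ge> 0" using t by simp
  have [measurable]: "Z t \<in> borel_measurable (P z)" by (rule ZmeasP[OF z t0])
  define S where "S = {\<omega>\<in>space M. Z t \<omega> \<in> U}"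
  have S: "S = Z t -` U \<inter> space (P z)" by (auto simp: S_def spaceP[OF z])
  have Ssets: "S \<in> sets (P z)" unfolding S using U by measurable
  have "emeasure (P z) S = (\<integral>\<^sup>+\<omega>. indicator S \<omega> \<partial>P z)"
    by (rule nn_integral_indicator[symmetric, OF Ssets])
  also have "\<dots> \<le> (\<integral>\<^sup>+\<omega>. ennreal (exp (-c)) * ennreal (exp (a \<bullet> (Z t \<omega> - z))) \<partial>P z)"
  proof (rule nn_integral_mono)
    fix \<omega> assume "\<omega> \<in> space (P z)"
    show "indicator S \<omega> \<le> ennreal (exp (-c)) * ennreal (exp (a \<bullet> (Z t \<omega> - z)))"
    proof (cases "\<omega> \<in> S")
      case True
      then have "c \<le> a \<bullet> (Z t \<omega> - z)" using cond by (auto simp: S_def)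
      then have "1 \<le> exp (-c) * exp (a \<bullet> (Z t \<omega> - z))"
        by (simp add: exp_add[symmetric])
      then show ?thesis using True by (simp add: ennreal_mult'[symmetric])
    qed simp
  qed
  also have "\<dots> = ennreal (exp (-c)) * (\<integral>\<^sup>+\<omega>. ennreal (exp (a \<bullet> (Z t \<omega> - z))) \<partial>P z)"
    by (rule nn_integral_cmult) measurable
  also have "\<dots> \<le> ennreal (exp (-c)) * ennreal (Phi a ^ Suc k)"
    using exp_bound[OF fin, of k] z t by (intro mult_left_mono) auto
  also have "\<dots> = ennreal (exp (-c) * Phi a ^ Suc k)"
    using Phi_ge1[of a] by (simp add: ennreal_mult'[symmetric])
  finally have "ennreal (measure (P z) S) \<le> ennreal (exp (-c) * Phi a ^ Suc k)"
    by (simp add: emeasure_eq_measure)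
  then show ?thesis
    using Phi_ge1[of a] unfolding S_def by (subst (asm) ennreal_le_iff) auto
qed

end

lemma set_int_bound:
  fixes f :: "real \<Rightarrow> real"
  assumes int: "set_integrable lborel {0..b} f" and b: "b \<ge> 0" and bd: "\<And>t. t \<in> {0..b} \<Longrightarrow> f t \<le> C"
  shows "(LINT t:{0..b}|lborel. f t) \<le> b * C"
proof -
  have cint: "set_integrable lborel {0..b} (\<lambda>_. C)"
    unfolding set_integrable_def
    by (rule integrableI_bounded_set[where A="{0..b}" and B="\<bar>C\<bar>"]) (auto simp: indicator_def emeasure_lborel_Icc_eq)
  have "(LINT t:{0..b}|lborel. f t) \<le> (LINT t:{0..b}|lborel. C)"
    by (rule set_integral_mono[OF int cint bd])
  also have "\<dots> = b * C" using b by (subst set_integral_const) auto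
  finally show ?thesis .
qed

lemma set_int_mono:
  fixes f g :: "real \<Rightarrow> real"
  assumes "set_integrable lborel {0..b} f" "set_integrable lborel {0..b} g" "\<And>t. t \<in> {0..b} \<Longrightarrow> f t \<le> g t"
  shows "(LINT t:{0..b}|lborel. f t) \<le> (LINT t:{0..b}|lborel. g t)"
  by (rule set_integral_mono[OF assms])



lemma mono_at_right0:
  fixes f :: "real \<Rightarrow> ereal"
  assumes mono: "\<And>x y. 0 < x \<Longrightarrow> x \<le> y \<Longrightarrow> f x \<le> f y"
  shows "(f \<longlongrightarrow> Inf (f ` {0<..})) (at_right 0)"
proof (rule order_tendstoI)
  fix y assume y: "y < Inf (f ` {0<..})"
  show "eventually (\<lambda>x. y < f x) (at_right 0)"
    using eventually_at_right_less[of "0::real"]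
  proof (rule eventually_mono)
    fix x :: real assume "0 < x"
    then have "Inf (f ` {0<..}) \<le> f x" by (intro INF_lower) simp
    then show "y < f x" using y by simp
  qed
next
  fix y assume y: "Inf (f ` {0<..}) < y"
  then obtain x0 where x0: "x0 > 0" "f x0 < y" by (auto simp: Inf_less_iff)
  show "eventually (\<lambda>x. f x < y) (at_right 0)"
    unfolding eventually_at_right[OF x0(1)]
    using x0 mono by (intro exI[of _ x0]) (meson le_less_trans less_imp_le)
qed

lemma eln_mono: "x \<le> y \<Longrightarrow> eln x \<le> eln y"
  by (auto simp: eln_def)

lemma ln_lim: "((\<lambda>n::real. (K + ln n) / n) \<longlongrightarrow> 0) at_top"
  by real_asymp

lemma scaled_ball_open: "n > 0 \<Longrightarrow> (\<lambda>x. n *\<^sub>R x) ` ball (c::'a::euclidean_space) r \<in> sets borel"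
  by (intro borel_open open_scaling) auto

theorem lemma3p1:
  fixes E :: "'a::euclidean_space set" and M :: "'w measure" and F :: "real \<Rightarrow> 'w measure"
    and P :: "'a \<Rightarrow> 'w measure" and Z :: "real \<Rightarrow> 'w \<Rightarrow> 'a"
    and q q' :: 'a and A :: real
  assumes unbounded: "\<not> bounded E"
    and markov: "strong_markov_process E M F P Z"
    and H2: "\<forall>a::'a. (SUP z\<in>E. SUP t\<in>{0..1}.
               \<integral>\<^sup>+\<omega>. ennreal (exp (a \<bullet> (Z t \<omega> - z))) \<partial>P z) < \<infinity>"
    and "q \<noteq> q'" and "A > 0"
  shows "\<exists>\<kappa>>0. \<exists>L. ((\<lambda>\<delta>. Limsup at_top (\<lambda>n::real.
              SUP z\<in>{z\<in>E. norm (z - n *\<^sub>R q) < \<delta> * n}.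
                eln (LINT t:{0..\<kappa> * n}|lborel.
                       measure (P z) {\<omega>\<in>space M. Z t \<omega> \<in> (\<lambda>x. n *\<^sub>R x) ` ball q' \<delta>})
                / ereal n))
             \<longlongrightarrow> L) (at_right 0) \<and> L \<le> ereal (- A)"
proof -
  interpret S: smp E M F P Z by (rule smp.intro[OF markov])
  note qq = \<open>q \<noteq> q'\<close> and A0 = \<open>A > 0\<close>
  define D where "D = norm (q' - q)"
  have D0: "D > 0" using qq by (simp add: D_def)
  define lam where "lam = 2 * (A + 1) / D"
  have lam0: "lam > 0" using D0 A0 by (simp add: lam_def)
  define a where "a = (lam / D) *\<^sub>R (q' - q)"
  have aqq: "a \<bullet> (q' - q) = 2 * (A + 1)"
  proof -
    have "a \<bullet> (q' - q) = (lam / D) * (norm (q' - q))^2"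
      by (simp add: a_def power2_norm_eq_inner)
    also have "\<dots> = lam * D" using D0 by (simp add: D_def power2_eq_square)
    finally show ?thesis using D0 by (simp add: lam_def)
  qed
  have na: "norm a = lam" using D0 lam0 by (simp add: a_def D_def)
  have fin: "(SUP z\<in>E. SUP t\<in>{0..1}. \<integral>\<^sup>+\<omega>. ennreal (exp (a \<bullet> (Z t \<omega> - z))) \<partial>P z) < \<infinity>"
    using H2 by blast
  define Phi where "Phi = S.Phi a"
  have Phi1: "Phi \<ge> 1" by (simp add: Phi_def S.Phi_ge1)
  define l where "l = ln Phi"
  have l0: "l \<ge> 0" using Phi1 by (simp add: l_def)
  define \<kappa> where "\<kappa> = 1 / (1 + l)"
  have k0: "\<kappa> > 0" using l0 by (simp add: \<kappa>_def)
  have kl: "\<kappa> * l \<le> 1" using l0 by (simp add: \<kappa>_def divide_simps)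
  define f where "f = (\<lambda>\<delta>. Limsup at_top (\<lambda>n::real.
              SUP z\<in>{z\<in>E. norm (z - n *\<^sub>R q) < \<delta> * n}.
                eln (LINT t:{0..\<kappa> * n}|lborel.
                       measure (P z) {\<omega>\<in>space M. Z t \<omega> \<in> (\<lambda>x. n *\<^sub>R x) ` ball q' \<delta>})
                / ereal n))"
  have mono: "f x \<le> f y" if xy: "0 < x" "x \<le> y" for x y
    unfolding f_def
  proof (rule Limsup_mono)
    show "\<forall>\<^sub>F n in at_top. (SUP z\<in>{z\<in>E. norm (z - n *\<^sub>R q) < x * n}.
                eln (LINT t:{0..\<kappa> * n}|lborel.
                       measure (P z) {\<omega>\<in>space M. Z t \<omega> \<in> (\<lambda>x. n *\<^sub>R x) ` ball q' x})
                / ereal n) \<le> (SUP z\<in>{z\<in>E. norm (z - n *\<^sub>R q) < y * n}.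
                eln (LINT t:{0..\<kappa> * n}|lborel.
                       measure (P z) {\<omega>\<in>space M. Z t \<omega> \<in> (\<lambda>x. n *\<^sub>R x) ` ball q' y})
                / ereal n)"
      using eventually_gt_at_top[of "0::real"]
    proof (rule eventually_mono)
      fix n :: real assume n0: "0 < n"
      show "(SUP z\<in>{z\<in>E. norm (z - n *\<^sub>R q) < x * n}.
                eln (LINT t:{0..\<kappa> * n}|lborel.
                       measure (P z) {\<omega>\<in>space M. Z t \<omega> \<in> (\<lambda>x. n *\<^sub>R x) ` ball q' x})
                / ereal n) \<le> (SUP z\<in>{z\<in>E. norm (z - n *\<^sub>R q) < y * n}.
                eln (LINT t:{0..\<kappa> * n}|lborel.
                       measure (P z) {\<omega>\<in>space M. Z t \<omega> \<in> (\<lambda>x. n *\<^sub>R x) ` ball q' y})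
                / ereal n)"
      proof (rule SUP_mono)
        fix z assume z: "z \<in> {z\<in>E. norm (z - n *\<^sub>R q) < x * n}"
        have zE: "z \<in> E" using z by simp
        have "x * n \<le> y * n" using xy n0 by (simp add: mult_right_mono)
        then have z2: "z \<in> {z\<in>E. norm (z - n *\<^sub>R q) < y * n}" using z by auto
        interpret Pz: prob_space "P z" using S.probP[OF zE] .
        have Ux: "(\<lambda>x. n *\<^sub>R x) ` ball q' x \<in> sets borel" using n0 by (rule scaled_ball_open)
        have Uy: "(\<lambda>x. n *\<^sub>R x) ` ball q' y \<in> sets borel" using n0 by (rule scaled_ball_open)
        have sub: "(\<lambda>x. n *\<^sub>R x) ` ball q' x \<subseteq> (\<lambda>x. n *\<^sub>R x) ` ball q' y"
          using xy by (intro image_mono) auto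
        have "(LINT t:{0..\<kappa> * n}|lborel. measure (P z) {\<omega>\<in>space M. Z t \<omega> \<in> (\<lambda>x. n *\<^sub>R x) ` ball q' x})
           \<le> (LINT t:{0..\<kappa> * n}|lborel. measure (P z) {\<omega>\<in>space M. Z t \<omega> \<in> (\<lambda>x. n *\<^sub>R x) ` ball q' y})"
        proof (rule set_int_mono[OF S.integrand_int[OF zE Ux] S.integrand_int[OF zE Uy]])
          fix t :: real assume t: "t \<in> {0..\<kappa> * n}"
          have "{\<omega>\<in>space M. Z t \<omega> \<in> (\<lambda>x. n *\<^sub>R x) ` ball q' y} = Z t -` ((\<lambda>x. n *\<^sub>R x) ` ball q' y) \<inter> space (P z)"
            by (auto simp: S.spaceP[OF zE])
          also have "\<dots> \<in> sets (P z)"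
            using S.ZmeasP[OF zE, of t] t Uy by (intro measurable_sets) auto
          finally show "measure (P z) {\<omega>\<in>space M. Z t \<omega> \<in> (\<lambda>x. n *\<^sub>R x) ` ball q' x}
              \<le> measure (P z) {\<omega>\<in>space M. Z t \<omega> \<in> (\<lambda>x. n *\<^sub>R x) ` ball q' y}"
            using sub by (intro Pz.finite_measure_mono) auto
        qed
        then have "eln (LINT t:{0..\<kappa> * n}|lborel. measure (P z) {\<omega>\<in>space M. Z t \<omega> \<in> (\<lambda>x. n *\<^sub>R x) ` ball q' x}) / ereal n
           \<le> eln (LINT t:{0..\<kappa> * n}|lborel. measure (P z) {\<omega>\<in>space M. Z t \<omega> \<in> (\<lambda>x. n *\<^sub>R x) ` ball q' y}) / ereal n"
          using n0 by (intro ereal_divide_right_mono eln_mono) auto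
        then show "\<exists>z'\<in>{z\<in>E. norm (z - n *\<^sub>R q) < y * n}.
           eln (LINT t:{0..\<kappa> * n}|lborel. measure (P z) {\<omega>\<in>space M. Z t \<omega> \<in> (\<lambda>x. n *\<^sub>R x) ` ball q' x}) / ereal n
           \<le> eln (LINT t:{0..\<kappa> * n}|lborel. measure (P z') {\<omega>\<in>space M. Z t \<omega> \<in> (\<lambda>x. n *\<^sub>R x) ` ball q' y}) / ereal n"
          using z2 by blast
      qed
    qed
  qed
  have lim: "(f \<longlongrightarrow> Inf (f ` {0<..})) (at_right 0)"
    by (rule mono_at_right0) (rule mono)
  define \<delta>0 where "\<delta>0 = 1 / (2 * lam)"
  have d0: "\<delta>0 > 0" using lam0 by (simp add: \<delta>0_def)
  have key: "f \<delta>0 \<le> ereal (- A)"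
  proof -
    define K where "K = ln \<kappa> + 2 * l"
    have ev: "eventually (\<lambda>n. 1 \<le> n \<and> (K + ln n) / n < A) at_top"
      using eventually_ge_at_top[of "1::real"] order_tendstoD(2)[OF ln_lim[of K] A0]
      by (rule eventually_conj)
    show ?thesis unfolding f_def
    proof (rule Limsup_bounded)
      show "\<forall>\<^sub>F n in at_top. (SUP z\<in>{z\<in>E. norm (z - n *\<^sub>R q) < \<delta>0 * n}.
                eln (LINT t:{0..\<kappa> * n}|lborel.
                       measure (P z) {\<omega>\<in>space M. Z t \<omega> \<in> (\<lambda>x. n *\<^sub>R x) ` ball q' \<delta>0})
                / ereal n) \<le> ereal (- A)"
        using ev
      proof (rule eventually_mono)
        fix n :: real assume n: "1 \<le> n \<and> (K + ln n) / n < A"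
        have n0: "n > 0" using n by simp
        define U where "U = (\<lambda>x. n *\<^sub>R x) ` ball q' \<delta>0"
        have U: "U \<in> sets borel" unfolding U_def using n0 by (rule scaled_ball_open)
        define C where "C = exp (- 2 * A * n + 2 * l)"
        show "(SUP z\<in>{z\<in>E. norm (z - n *\<^sub>R q) < \<delta>0 * n}.
                eln (LINT t:{0..\<kappa> * n}|lborel.
                       measure (P z) {\<omega>\<in>space M. Z t \<omega> \<in> (\<lambda>x. n *\<^sub>R x) ` ball q' \<delta>0})
                / ereal n) \<le> ereal (- A)"
        proof (rule SUP_least)
          fix z assume z: "z \<in> {z\<in>E. norm (z - n *\<^sub>R q) < \<delta>0 * n}"
          have zE: "z \<in> E" and zq: "norm (z - n *\<^sub>R q) < \<delta>0 * n" using z by auto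
          define I where "I = (LINT t:{0..\<kappa> * n}|lborel. measure (P z) {\<omega>\<in>space M. Z t \<omega> \<in> U})"
          have cond: "n * (2 * A + 1) \<le> a \<bullet> (x - z)" if x: "x \<in> U" for x
          proof -
            obtain y where y: "y \<in> ball q' \<delta>0" and xy: "x = n *\<^sub>R y" using x by (auto simp: U_def)
            have ny: "norm (y - q') < \<delta>0" using y by (simp add: dist_norm norm_minus_commute)
            have xz: "x - z = n *\<^sub>R (y - q') + n *\<^sub>R (q' - q) + (n *\<^sub>R q - z)"
              by (simp add: xy algebra_simps)
            have eq: "a \<bullet> (x - z) = n * (a \<bullet> (y - q')) + n * (a \<bullet> (q' - q)) + a \<bullet> (n *\<^sub>R q - z)"
              by (subst xz) (simp only: inner_add_right inner_scaleR_right)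
            have "- (a \<bullet> (y - q')) \<le> norm a * norm (y - q')"
              using Cauchy_Schwarz_ineq2[of a "y - q'"] by linarith
            also have "\<dots> \<le> lam * \<delta>0" using ny na lam0 by (simp add: less_imp_le)
            also have "\<dots> = 1/2" using lam0 by (simp add: \<delta>0_def)
            finally have b1: "- (a \<bullet> (y - q')) \<le> 1/2" .
            have "- (a \<bullet> (n *\<^sub>R q - z)) \<le> norm a * norm (n *\<^sub>R q - z)"
              using Cauchy_Schwarz_ineq2[of a "n *\<^sub>R q - z"] by linarith
            also have "\<dots> \<le> lam * (\<delta>0 * n)" using zq na lam0
              by (simp add: norm_minus_commute less_imp_le)
            also have "\<dots> = n / 2" using lam0 by (simp add: \<delta>0_def)
            finally have b2: "- (a \<bullet> (n *\<^sub>R q - z)) \<le> n / 2" .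
            have "n * (- (a \<bullet> (y - q'))) \<le> n * (1/2)" using b1 n0 by (intro mult_left_mono) auto
            then show ?thesis unfolding eq aqq using b2 by (simp add: algebra_simps)
          qed
          have IC: "I \<le> (\<kappa> * n) * C"
            unfolding I_def
          proof (rule set_int_bound[OF S.integrand_int[OF zE U]])
            show "0 \<le> \<kappa> * n" using k0 n0 by simp
          next
            fix t assume t: "t \<in> {0..\<kappa> * n}"
            define k where "k = nat \<lceil>\<kappa> * n\<rceil>"
            have kr: "real k = real_of_int \<lceil>\<kappa> * n\<rceil>" using k0 n0 by (simp add: k_def)
            have tk: "t \<in> {0..real (Suc k)}"
            proof -
              have ce: "\<kappa> * n \<le> real_of_int \<lceil>\<kappa> * n\<rceil>" by (rule le_of_int_ceiling)
              have t1: "t \<le> \<kappa> * n" "0 \<le> t" using t by auto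
              have "t \<le> real k" using t1 kr ce by linarith
              then show ?thesis using t1 by simp
            qed
            have sk: "real (Suc k) \<le> \<kappa> * n + 2" using kr by linarith
            have "measure (P z) {\<omega>\<in>space M. Z t \<omega> \<in> U} \<le> exp (- (n * (2 * A + 1))) * Phi ^ Suc k"
              unfolding Phi_def by (rule S.prob_bound[OF fin zE tk U cond])
            also have "Phi ^ Suc k = exp (real (Suc k) * l)"
            proof -
              have el: "exp l = Phi" using Phi1 by (simp add: l_def)
              show ?thesis by (simp only: exp_of_nat_mult el)
            qed
            also have "exp (- (n * (2 * A + 1))) * exp (real (Suc k) * l) = exp (- (n * (2 * A + 1)) + real (Suc k) * l)"
              by (simp only: exp_add)
            also have "\<dots> \<le> C"
              unfolding C_def
            proof (subst exp_le_cancel_iff)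
              have "real (Suc k) * l \<le> (\<kappa> * n + 2) * l" using sk l0 by (rule mult_right_mono)
              also have "\<dots> = (\<kappa> * l) * n + 2 * l" by (simp add: algebra_simps)
              also have "\<dots> \<le> 1 * n + 2 * l" using kl n0 by (intro add_right_mono mult_right_mono) auto
              finally show "- (n * (2 * A + 1)) + real (Suc k) * l \<le> - 2 * A * n + 2 * l"
                by (simp add: algebra_simps)
            qed
            finally show "measure (P z) {\<omega>\<in>space M. Z t \<omega> \<in> U} \<le> C" .
          qed
          have "eln I / ereal n \<le> ereal (- A)"
          proof (cases "I \<le> 0")
            case True
            then show ?thesis using n0 by (simp add: eln_def divide_ereal_def)
          next
            case False
            then have I0: "I > 0" by simp
            have C0: "C > 0" by (simp add: C_def)
            have "ln I \<le> ln ((\<kappa> * n) * C)" using IC I0 by simp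
            also have "\<dots> = ln \<kappa> + ln n + (- 2 * A * n + 2 * l)"
              using k0 n0 C0 by (simp add: ln_mult C_def)
            finally have "ln I \<le> K + ln n - 2 * A * n" by (simp add: K_def)
            then have "ln I / n \<le> (K + ln n - 2 * A * n) / n" using n0 by (simp add: divide_right_mono)
            also have "\<dots> = (K + ln n) / n - 2 * A" using n0 by (simp add: diff_divide_distrib)
            also have "\<dots> < - A" using n by simp
            finally have "ln I / n < - A" .
            then show ?thesis using I0 n0 by (simp add: eln_def)
          qed
          then show "eln (LINT t:{0..\<kappa> * n}|lborel.
                       measure (P z) {\<omega>\<in>space M. Z t \<omega> \<in> (\<lambda>x. n *\<^sub>R x) ` ball q' \<delta>0})
                / ereal n \<le> ereal (- A)"
            by (simp add: I_def U_def)
        qed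
      qed
    qed
  qed
  have "Inf (f ` {0<..}) \<le> ereal (- A)"
    using d0 key by (meson INF_lower2 greaterThan_iff)
  then show ?thesis using lim k0 unfolding f_def by blast
qed

end
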